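(* Let $\boldsymbol\mu$ be a ratio set and let $\boldsymbol\alpha$ be a derivative addendum for $\boldsymbol\mu$. For all $S,T\in\mathbb T$ generated by $\boldsymbol\mu$: if $S\prec^{\boldsymbol\mu}T$, $T\not\asymp1$, and $\boldsymbol\mu$ witnesses $T$, then $S'\prec^{\boldsymbol\alpha}T'$.
   Context: $\mathbb T$ is the differential field of real grid-based transseries over the ordered group $\mathfrak G$ of transmonomials, with $\prec,\asymp$; $\operatorname{mag}T$ is the dominant monomial of $T\ne0$. A ratio set is a finite $\boldsymbol\mu=\{\mu_1,\dots,\mu_n\}\subset\{\mathfrak g\prec1\}$; $\boldsymbol\mu^*$, $\boldsymbol\mu^+$ are the sets $\boldsymbol\mu^{\mathbf k}$ with $\mathbf k\in\mathbb Z^n$, $\mathbf k\ge\mathbf 0$ (resp. additionally $\mathbf k\ne\mathbf0$); $\mathfrak J^{\boldsymbol\mu}$ is the group generated, $\mathfrak J^{\boldsymbol\mu,\mathbf m}=\{\boldsymbol\mu^{\mathbf k}:\mathbf k\ge\mathbf m\}$. Monomials: $\mathfrak m\prec^{\boldsymbol\mu}\mathfrak n$ iff $\mathfrak m/\mathfrak n\in\boldsymbol\mu^+$; transseries: $A\prec^{\boldsymbol\mu}B$ iff each $\mathfrak a\in\operatorname{supp}A$ is $\prec^{\boldsymbol\mu}$ some $\mathfrak b\in\operatorname{supp}B$. $\boldsymbol\alpha$ witnesses nonzero $T$ iff $\operatorname{supp}T\subseteq(\operatorname{mag}T)\boldsymbol\alpha^*$, and generates $T$ iff $\operatorname{supp}T\subseteq\mathfrak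 J^{\boldsymbol\alpha,\mathbf m}$ for some $\mathbf m$. A derivative addendum for $\boldsymbol\mu$ is a ratio set $\boldsymbol\alpha$ with: (a) $\boldsymbol\alpha^*\supseteq\boldsymbol\mu$; (b) for every $\mathfrak m\in\mathfrak J^{\boldsymbol\mu}$, $\mathfrak m'$ is witnessed and generated by $\boldsymbol\alpha$; (c) for all $\mathfrak m,\mathfrak n\in\mathfrak J^{\boldsymbol\mu}$ with $\mathfrak m\prec^{\boldsymbol\mu}\mathfrak n$, $\mathfrak n\ne1$: $\mathfrak m'\prec^{\boldsymbol\alpha}\operatorname{mag}(\mathfrak n')$. *)

theory Defs
  imports Complex_Main
begin

(* Monomials: an abstract linearly ordered abelian group 'g, written ADDITIVELY
   (think "logarithm of the monomial"): monomial product = +, monomial 1 = 0,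
   m \<prec> n  iff  m < n,  m \<preceq> n iff m \<le> n.
   Transseries: real coefficient functions 'g \<Rightarrow> real with grid-based support. *)

type_synonym 'g ser = "'g \<Rightarrow> real"

definition supp :: "'g ser \<Rightarrow> 'g set" where
  "supp S = {g. S g \<noteq> 0}"

definition mono :: "'g \<Rightarrow> 'g ser" where
  "mono g = (\<lambda>h. if h = g then 1 else 0)"

definition nsc :: "nat \<Rightarrow> 'g::ab_group_add \<Rightarrow> 'g" where
  "nsc n g = (((+) g) ^^ n) 0"

definition zsc :: "int \<Rightarrow> 'g::ab_group_add \<Rightarrow> 'g" where
  "zsc k g = (if 0 \<le> k then nsc (nat k) g else - nsc (nat (- k)) g)"

definition rpow :: "'g::ab_group_add set \<Rightarrow> ('g \<Rightarrow> int) \<Rightarrow> 'g" where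
  "rpow \<mu> k = (\<Sum>g\<in>\<mu>. zsc (k g) g)"

definition ratio_set :: "'g::linordered_ab_group_add set \<Rightarrow> bool" where
  "ratio_set \<mu> \<longleftrightarrow> finite \<mu> \<and> (\<forall>g\<in>\<mu>. g < 0)"

definition rstar :: "'g::ab_group_add set \<Rightarrow> 'g set" where
  "rstar \<mu> = {rpow \<mu> k | k. \<forall>g\<in>\<mu>. 0 \<le> k g}"

definition rplus :: "'g::ab_group_add set \<Rightarrow> 'g set" where
  "rplus \<mu> = {rpow \<mu> k | k. (\<forall>g\<in>\<mu>. 0 \<le> k g) \<and> (\<exists>g\<in>\<mu>. k g \<noteq> 0)}"

definition rgrp :: "'g::ab_group_add set \<Rightarrow> 'g set" where
  "rgrp \<mu> = {rpow \<mu> k | k. True}"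

definition rgrpm :: "'g::ab_group_add set \<Rightarrow> ('g \<Rightarrow> int) \<Rightarrow> 'g set" where
  "rgrpm \<mu> m = {rpow \<mu> k | k. \<forall>g\<in>\<mu>. m g \<le> k g}"

definition mprec :: "'g::ab_group_add set \<Rightarrow> 'g \<Rightarrow> 'g \<Rightarrow> bool" where
  "mprec \<mu> m n \<longleftrightarrow> m - n \<in> rplus \<mu>"

definition sprec :: "'g::ab_group_add set \<Rightarrow> 'g ser \<Rightarrow> 'g ser \<Rightarrow> bool" where
  "sprec \<mu> A B \<longleftrightarrow> (\<forall>a\<in>supp A. \<exists>b\<in>supp B. mprec \<mu> a b)"

definition mag :: "'g::linorder ser \<Rightarrow> 'g" where
  "mag T = (GREATEST g. g \<in> supp T)"

definition asymp_one :: "'g::linordered_ab_group_add ser \<Rightarrow> bool" where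
  "asymp_one T \<longleftrightarrow> T \<noteq> (\<lambda>_. 0) \<and> mag T = 0"

definition witnesses :: "'g::linordered_ab_group_add set \<Rightarrow> 'g ser \<Rightarrow> bool" where
  "witnesses \<alpha> T \<longleftrightarrow> T \<noteq> (\<lambda>_. 0) \<and> supp T \<subseteq> (\<lambda>g. mag T + g) ` rstar \<alpha>"

definition generates :: "'g::ab_group_add set \<Rightarrow> 'g ser \<Rightarrow> bool" where
  "generates \<alpha> T \<longleftrightarrow> (\<exists>m. supp T \<subseteq> rgrpm \<alpha> m)"

definition grid_based :: "'g::linordered_ab_group_add ser \<Rightarrow> bool" where
  "grid_based T \<longleftrightarrow> (\<exists>G m. finite G \<and> (\<forall>g\<in>G. g < 0) \<and> supp T \<subseteq> (\<lambda>g. m + g) ` rstar G)"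

(* Strongly linear extension of a derivation given on monomials: d m = m'.
   (S')_h = \<Sum>_{m \<in> supp S} S_m (m')_h  (the sum is finite by strong summability). *)
definition sder :: "('g \<Rightarrow> 'g ser) \<Rightarrow> 'g ser \<Rightarrow> 'g ser" where
  "sder d S = (\<lambda>h. \<Sum>m\<in>{m\<in>supp S. d m h \<noteq> 0}. S m * d m h)"

(* Abstract description of the transseries derivation on monomials:
   m' is a grid-based series, 1' = 0, m' \<noteq> 0 for m \<noteq> 1, Leibniz rule on
   monomials, and the strongly linear extension to grid-based series is
   well-defined (strongly summable) and lands in grid-based series. *)
definition transseries_derivation :: "('g::linordered_ab_group_add \<Rightarrow> 'g ser) \<Rightarrow> bool" where
  "transseries_derivation d \<longleftrightarrow>
     (\<forall>g. grid_based (d g)) \<and>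
     d 0 = (\<lambda>_. 0) \<and>
     (\<forall>g. g \<noteq> 0 \<longrightarrow> d g \<noteq> (\<lambda>_. 0)) \<and>
     (\<forall>m n. d (m + n) = (\<lambda>h. d m (h - n) + d n (h - m))) \<and>
     (\<forall>S. grid_based S \<longrightarrow>
          (\<forall>h. finite {m\<in>supp S. d m h \<noteq> 0}) \<and> grid_based (sder d S))"

definition deriv_addendum ::
  "('g::linordered_ab_group_add \<Rightarrow> 'g ser) \<Rightarrow> 'g set \<Rightarrow> 'g set \<Rightarrow> bool" where
  "deriv_addendum d \<mu> \<alpha> \<longleftrightarrow>
     ratio_set \<alpha> \<and>
     \<mu> \<subseteq> rstar \<alpha> \<and>
     (\<forall>m\<in>rgrp \<mu>. (d m \<noteq> (\<lambda>_. 0) \<longrightarrow> witnesses \<alpha> (d m)) \<and> generates \<alpha> (d m)) \<and>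
     (\<forall>m\<in>rgrp \<mu>. \<forall>n\<in>rgrp \<mu>. mprec \<mu> m n \<and> n \<noteq> 0 \<longrightarrow>
          sprec \<alpha> (d m) (mono (mag (d n))))"

end

theory Submission
  imports Defs
begin


lemma nsc_0[simp]: "nsc 0 g = 0" by (simp add: nsc_def)
lemma nsc_Suc[simp]: "nsc (Suc n) g = g + nsc n g" by (simp add: nsc_def)
lemma nsc_add: "nsc (m + n) g = nsc m g + nsc n g"
  by (induction m) (simp_all add: add.assoc)
lemma nsc_nonpos: "(g::'g::linordered_ab_group_add) \<le> 0 \<Longrightarrow> nsc n g \<le> 0"
  by (induction n) (simp_all add: add_nonpos_nonpos)
lemma nsc_neg: "(g::'g::linordered_ab_group_add) < 0 \<Longrightarrow> 0 < n \<Longrightarrow> nsc n g < 0"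
  by (cases n) (simp_all add: add_neg_nonpos nsc_nonpos)
lemma nsc_anti: "(g::'g::linordered_ab_group_add) \<le> 0 \<Longrightarrow> m \<le> n \<Longrightarrow> nsc n g \<le> nsc m g"
proof -
  assume a: "g \<le> 0" "m \<le> n"
  then obtain p where "n = m + p" using le_Suc_ex by blast
  then show ?thesis using nsc_nonpos[OF a(1), of p] by (simp add: nsc_add)
qed

lemma zsc_nonneg: "0 \<le> k \<Longrightarrow> zsc k g = nsc (nat k) g" by (simp add: zsc_def)

lemma rpow_add:
  assumes "\<forall>g\<in>\<mu>. 0 \<le> k g" "\<forall>g\<in>\<mu>. 0 \<le> k' g"
  shows "rpow \<mu> k + rpow \<mu> k' = rpow \<mu> (\<lambda>g. k g + k' g)"
  unfolding rpow_def sum.distrib[symmetric]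
  by (rule sum.cong) (use assms in \<open>auto simp: zsc_nonneg nat_add_distrib nsc_add\<close>)

lemma rplus_add_rstar:
  assumes "x \<in> rplus \<mu>" "y \<in> rstar \<mu>" shows "x + y \<in> rplus \<mu>"
proof -
  obtain k where k: "x = rpow \<mu> k" "\<forall>g\<in>\<mu>. 0 \<le> k g" "\<exists>g\<in>\<mu>. k g \<noteq> 0"
    using assms(1) unfolding rplus_def by blast
  obtain k' where k': "y = rpow \<mu> k'" "\<forall>g\<in>\<mu>. 0 \<le> k' g"
    using assms(2) unfolding rstar_def by blast
  have "x + y = rpow \<mu> (\<lambda>g. k g + k' g)" using k k' rpow_add by metis
  moreover have "\<exists>g\<in>\<mu>. k g + k' g \<noteq> 0" using k k'
    by (metis add_nonneg_eq_0_iff)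
  ultimately show ?thesis using k k' unfolding rplus_def by force
qed

lemma rstar_nz_rplus:
  assumes "x \<in> rstar \<mu>" "x \<noteq> 0" shows "x \<in> rplus \<mu>"
proof -
  obtain k where k: "x = rpow \<mu> k" "\<forall>g\<in>\<mu>. 0 \<le> k g"
    using assms(1) unfolding rstar_def by blast
  have "\<exists>g\<in>\<mu>. k g \<noteq> 0"
  proof (rule ccontr)
    assume "\<not> ?thesis"
    then have "rpow \<mu> k = 0" unfolding rpow_def by (simp add: zsc_def)
    then show False using k assms by simp
  qed
  then show ?thesis using k unfolding rplus_def by blast
qed

lemma rplus_neg:
  assumes "ratio_set \<alpha>" "x \<in> rplus \<alpha>" shows "x < 0"
proof -
  obtain k where k: "x = rpow \<alpha> k" "\<forall>g\<in>\<alpha>. 0 \<le> k g" and "\<exists>g\<in>\<alpha>. k g \<noteq> 0"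
    using assms(2) unfolding rplus_def by blast
  then obtain g0 where g0: "g0 \<in> \<alpha>" "k g0 \<noteq> 0" by blast
  have fin: "finite \<alpha>" and neg: "\<forall>g\<in>\<alpha>. g < 0" using assms(1) unfolding ratio_set_def by auto
  have "rpow \<alpha> k = zsc (k g0) g0 + (\<Sum>g\<in>\<alpha>-{g0}. zsc (k g) g)"
    unfolding rpow_def using fin g0 by (simp add: sum.remove)
  moreover have "zsc (k g0) g0 < 0"
    using k g0 neg by (auto simp: zsc_nonneg intro!: nsc_neg)
  moreover have "(\<Sum>g\<in>\<alpha>-{g0}. zsc (k g) g) \<le> 0"
    using k neg by (auto simp: zsc_nonneg intro!: sum_nonpos nsc_nonpos simp: less_imp_le)
  ultimately show ?thesis using k by (simp add: add_neg_nonpos)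
qed




lemma nat_subseq_inc:
  fixes s :: "nat \<Rightarrow> nat"
  shows "\<exists>f::nat\<Rightarrow>nat. strict_mono f \<and> (\<forall>i j. i \<le> j \<longrightarrow> s (f i) \<le> s (f j))"
proof -
  obtain f where f: "strict_mono f" "monoseq (\<lambda>n. s (f n))" using seq_monosub[of s] by (elim exE conjE) (rule that)
  show ?thesis
  proof (cases "\<forall>m n. m \<le> n \<longrightarrow> s (f m) \<le> s (f n)")
    case True then show ?thesis using f(1) by blast
  next
    case False
    then have dec: "\<forall>m n. m \<le> n \<longrightarrow> s (f n) \<le> s (f m)" using f(2) unfolding monoseq_def by (elim disjE) simp_all
    obtain N where N: "\<forall>y. s (f N) \<le> s (f y)"
      using ex_has_least_nat[of "\<lambda>_. True" 0 "\<lambda>n. s (f n)"] by auto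
    have c: "\<forall>m\<ge>N. s (f m) = s (f N)" by (intro allI impI antisym) (simp_all add: dec N)
    have "strict_mono (\<lambda>i. f (N + i))" using f(1) unfolding strict_mono_def by (intro allI impI) simp
    moreover have "\<forall>i j. i \<le> j \<longrightarrow> s (f (N + i)) \<le> s (f (N + j))" proof (intro allI impI) fix i j :: nat have "s (f (N+i)) = s (f N)" "s (f (N+j)) = s (f N)" by (rule c[rule_format, OF le_add1])+ then show "s (f (N+i)) \<le> s (f (N+j))" by simp qed
    ultimately show ?thesis by (intro exI[of _ "\<lambda>i. f (N + i)"]) simp
  qed
qed



lemma rstar_empty: "rstar {} = {0}"
  unfolding rstar_def rpow_def by simp

lemma rstar_insert:
  assumes "finite G" "g \<notin> G" "x \<in> rstar (insert g G)"
  shows "\<exists>n y. y \<in> rstar G \<and> x = nsc n g + y"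
proof -
  obtain k where k: "x = rpow (insert g G) k" "\<forall>h\<in>insert g G. 0 \<le> k h"
    using assms(3) unfolding rstar_def by blast
  have "x = zsc (k g) g + rpow G k" using k assms(1,2) unfolding rpow_def by simp
  moreover have "rpow G k \<in> rstar G" using k unfolding rstar_def by auto
  ultimately show ?thesis using k by (auto simp: zsc_nonneg)
qed



lemma rstar_subseq:
  fixes G :: "'g::linordered_ab_group_add set" and x :: "nat \<Rightarrow> 'g"
  shows "finite G \<Longrightarrow> \<forall>g\<in>G. g \<le> 0 \<Longrightarrow> (\<forall>i. x i \<in> rstar G) \<Longrightarrow> \<exists>f::nat\<Rightarrow>nat. strict_mono f \<and> (\<forall>i j. i \<le> j \<longrightarrow> x (f j) \<le> x (f i))"
proof (induction G arbitrary: x rule: finite_induct)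
  case empty
  then have "\<forall>i. x i = 0" by (simp add: rstar_empty)
  then show ?case by (auto intro!: exI[of _ id] simp: strict_mono_def)
next
  case (insert g G)
  have ex: "\<exists>q. snd q \<in> rstar G \<and> x i = nsc (fst q) g + snd q" for i
  proof -
    have "x i \<in> rstar (insert g G)" using insert.prems(2) by blast
    then obtain n y where "y \<in> rstar G" "x i = nsc n g + y"
      using rstar_insert[OF insert.hyps(1,2)] by blast
    then show ?thesis by (intro exI[of _ "(n, y)"]) simp
  qed
  define p where "p i = (SOME q. snd q \<in> rstar G \<and> x i = nsc (fst q) g + snd q)" for i
  define n where "n i = fst (p i)" for i
  define y where "y i = snd (p i)" for i
  have pp: "snd (p i) \<in> rstar G \<and> x i = nsc (fst (p i)) g + snd (p i)" for i
    unfolding p_def by (rule someI_ex[OF ex])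
  have ny: "y i \<in> rstar G" "x i = nsc (n i) g + y i" for i
    using pp[of i] unfolding n_def y_def by auto
  have G0: "\<forall>g\<in>G. g \<le> 0" using insert.prems(1) by simp
  have "\<forall>i. y i \<in> rstar G" using ny(1) by blast
  then obtain f1 :: "nat \<Rightarrow> nat" where f1: "strict_mono f1" "\<forall>i j. i \<le> j \<longrightarrow> y (f1 j) \<le> y (f1 i)"
    using insert.IH[OF G0] by blast
  obtain f2 :: "nat \<Rightarrow> nat" where f2: "strict_mono f2" "\<forall>i j. i \<le> j \<longrightarrow> n (f1 (f2 i)) \<le> n (f1 (f2 j))"
    using nat_subseq_inc[of "\<lambda>i. n (f1 i)"] by blast
  have g: "g \<le> 0" using insert.prems(1) by simp
  have "strict_mono (f1 \<circ> f2)" using f1(1) f2(1) by (simp add: strict_mono_def)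
  moreover have "\<forall>i j. i \<le> j \<longrightarrow> x ((f1 \<circ> f2) j) \<le> x ((f1 \<circ> f2) i)"
  proof (intro allI impI)
    fix i j :: nat assume ij: "i \<le> j"
    then have "f2 i \<le> f2 j" using f2(1) strict_mono_less_eq by blast
    then have a: "y (f1 (f2 j)) \<le> y (f1 (f2 i))" using f1(2) by blast
    have b: "nsc (n (f1 (f2 j))) g \<le> nsc (n (f1 (f2 i))) g"
      using nsc_anti[OF g] f2(2) ij by blast
    have "nsc (n (f1 (f2 j))) g + y (f1 (f2 j)) \<le> nsc (n (f1 (f2 i))) g + y (f1 (f2 i))"
      using add_mono[OF b a] .
    then show "x ((f1 \<circ> f2) j) \<le> x ((f1 \<circ> f2) i)" unfolding comp_def ny(2)[of "f1 (f2 i)"] ny(2)[of "f1 (f2 j)"] .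
  qed
  ultimately show ?case by blast
qed


lemma rstar_has_max:
  fixes G :: "'g::linordered_ab_group_add set"
  assumes "finite G" "\<forall>g\<in>G. g \<le> 0" "A \<subseteq> rstar G" "a0 \<in> A"
  shows "\<exists>a\<in>A. \<forall>b\<in>A. b \<le> a"
proof (rule ccontr)
  assume "\<not> ?thesis"
  then have "\<forall>a\<in>A. \<exists>b\<in>A. a < b" by (meson not_le)
  then obtain h where h0: "\<forall>a\<in>A. h a \<in> A \<and> a < h a" using bchoice[of A "\<lambda>a b. b \<in> A \<and> a < b"] by blast
  then have h: "\<And>a. a \<in> A \<Longrightarrow> h a \<in> A \<and> a < h a" by blast
  define x where "x i = (h ^^ i) a0" for i
  have xA: "x i \<in> A" for i by (induction i) (simp_all add: x_def assms(4) h)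
  have inc: "x i < x (Suc i)" for i using h[OF xA[of i]] by (simp add: x_def)
  obtain f :: "nat \<Rightarrow> nat" where f: "strict_mono f" "\<forall>i j. i \<le> j \<longrightarrow> x (f j) \<le> x (f i)"
    using rstar_subseq[OF assms(1,2), of x] xA assms(3) by (meson subsetD)
  have "f 0 < f 1" using f(1) by (simp add: strict_mono_def)
  then have "x (f 0) < x (f 1)" using lift_Suc_mono_less[of x, OF inc] by blast
  moreover have "x (f 1) \<le> x (f 0)" using f(2) by simp
  ultimately show False by simp
qed



lemma grid_max:
  fixes T :: "'g::linordered_ab_group_add ser"
  assumes "grid_based T" "T \<noteq> (\<lambda>_. 0)"
  shows "mag T \<in> supp T \<and> (\<forall>y\<in>supp T. y \<le> mag T)"
proof -
  obtain G m where G: "finite G" "\<forall>g\<in>G. g < 0" "supp T \<subseteq> (\<lambda>g. m + g) ` rstar G"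
    using assms(1) unfolding grid_based_def by blast
  obtain t where t: "t \<in> supp T" using assms(2) unfolding supp_def by auto
  define A where "A = {a \<in> rstar G. m + a \<in> supp T}"
  have "t - m \<in> A" using t G(3) unfolding A_def by auto
  moreover have "\<forall>g\<in>G. g \<le> 0" using G(2) by (simp add: less_imp_le)
  moreover have "A \<subseteq> rstar G" unfolding A_def by blast
  ultimately obtain a where a: "a \<in> A" "\<forall>b\<in>A. b \<le> a"
    using rstar_has_max[OF G(1)] by blast
  have max: "m + a \<in> supp T \<and> (\<forall>y\<in>supp T. y \<le> m + a)"
  proof
    show "m + a \<in> supp T" using a unfolding A_def by simp
    show "\<forall>y\<in>supp T. y \<le> m + a"
    proof
      fix y assume y: "y \<in> supp T"
      then obtain b where "b \<in> rstar G" "y = m + b" using G(3) by auto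
      then have "b \<in> A" using y unfolding A_def by simp
      then show "y \<le> m + a" using a \<open>y = m + b\<close> by simp
    qed
  qed
  have "mag T = m + a" unfolding mag_def using max by (intro Greatest_equality) auto
  then show ?thesis using max by simp
qed




lemma supp_mono: "supp (mono h) = {h}" unfolding supp_def mono_def by auto

theorem proposition4p8:
  fixes d :: "'g::linordered_ab_group_add \<Rightarrow> 'g ser"
    and \<mu> \<alpha> :: "'g set"
    and S T :: "'g ser"
  assumes "transseries_derivation d"
    and "ratio_set \<mu>"
    and "deriv_addendum d \<mu> \<alpha>"
    and "grid_based S" and "grid_based T"
    and "generates \<mu> S" and "generates \<mu> T"
    and "sprec \<mu> S T"
    and "\<not> asymp_one T"
    and "witnesses \<mu> T"
  shows "sprec \<alpha> (sder d S) (sder d T)"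
proof -
  have TD: "\<forall>g. grid_based (d g)" "\<forall>g. g \<noteq> 0 \<longrightarrow> d g \<noteq> (\<lambda>_. 0)"
    using assms(1) unfolding transseries_derivation_def by auto
  have ra: "ratio_set \<alpha>" and
    cc: "\<forall>m\<in>rgrp \<mu>. \<forall>n\<in>rgrp \<mu>. mprec \<mu> m n \<and> n \<noteq> 0 \<longrightarrow> sprec \<alpha> (d m) (mono (mag (d n)))"
    using assms(3) unfolding deriv_addendum_def by auto
  have Tnz: "T \<noteq> (\<lambda>_. 0)" and Tw: "supp T \<subseteq> (\<lambda>g. mag T + g) ` rstar \<mu>"
    using assms(10) unfolding witnesses_def by auto
  define t where "t = mag T"
  have tT: "t \<in> supp T" using grid_max[OF assms(5) Tnz] unfolding t_def by blast
  have t0: "t \<noteq> 0" using assms(9) Tnz unfolding asymp_one_def t_def by blast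
  have rgT: "supp T \<subseteq> rgrp \<mu>" using assms(7) unfolding generates_def rgrpm_def rgrp_def by blast
  have rgS: "supp S \<subseteq> rgrp \<mu>" using assms(6) unfolding generates_def rgrpm_def rgrp_def by blast
  have diff: "m - t \<in> rstar \<mu>" if "m \<in> supp T" for m
    using Tw that unfolding t_def by auto
  define h0 where "h0 = mag (d t)"
  have dt: "h0 \<in> supp (d t)" using grid_max[of "d t"] TD t0 unfolding h0_def by blast
  have others: "d m h0 = 0" if m: "m \<in> supp T" "m \<noteq> t" for m
  proof (rule ccontr)
    assume nz: "d m h0 \<noteq> 0"
    have "m - t \<in> rplus \<mu>" using rstar_nz_rplus[OF diff[OF m(1)]] m(2) by simp
    then have "mprec \<mu> m t" unfolding mprec_def .
    then have "sprec \<alpha> (d m) (mono h0)" using cc rgT m(1) tT t0 unfolding h0_def by blast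
    moreover have "h0 \<in> supp (d m)" using nz unfolding supp_def by simp
    ultimately have "h0 - h0 \<in> rplus \<alpha>" unfolding sprec_def mprec_def supp_mono by blast
    then show False using rplus_neg[OF ra] by fastforce
  qed
  have set: "{m \<in> supp T. d m h0 \<noteq> 0} = {t}"
    using others tT dt unfolding supp_def by auto
  have "sder d T h0 = T t * d t h0" unfolding sder_def set by simp
  then have h0T: "h0 \<in> supp (sder d T)" using tT dt unfolding supp_def by simp
  show ?thesis unfolding sprec_def
  proof
    fix h assume h: "h \<in> supp (sder d S)"
    have "{m \<in> supp S. d m h \<noteq> 0} \<noteq> {}"
    proof
      assume "{m \<in> supp S. d m h \<noteq> 0} = {}"
      then have "sder d S h = 0" unfolding sder_def by simp
      then show False using h unfolding supp_def by simp
    qed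
    then obtain s where s: "s \<in> supp S" "d s h \<noteq> 0" by blast
    obtain b where b: "b \<in> supp T" "mprec \<mu> s b" using assms(8) s(1) unfolding sprec_def by blast
    have "(s - b) + (b - t) \<in> rplus \<mu>"
      using rplus_add_rstar[OF b(2)[unfolded mprec_def] diff[OF b(1)]] .
    then have "mprec \<mu> s t" unfolding mprec_def by simp
    then have "sprec \<alpha> (d s) (mono h0)" using cc rgT rgS s(1) tT t0 unfolding h0_def by blast
    moreover have "h \<in> supp (d s)" using s(2) unfolding supp_def by simp
    ultimately have "mprec \<alpha> h h0" unfolding sprec_def supp_mono by blast
    then show "\<exists>b\<in>supp (sder d T). mprec \<alpha> h b" using h0T by blast
  qed
qed

end
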